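(* Let $N\ge 1$ and $n\ge 1$ be integers, and let $x>1$ and $1\le y<2$ be real numbers. Let $\mathcal{S}_0,\dots,\mathcal{S}_{n-1}$ be nonempty sets of QPSK sequences of length $N$ such that, for every $0\le i\le n-1$: (a) $\mathrm{PEP}(\mathbf{s})\le x\,y^{2i}N$ for every $\mathbf{s}\in\mathcal{S}_i$; and (b) if $\mathbf{s}\in\mathcal{S}_i$ then $j^m\mathbf{s}\in\mathcal{S}_i$ for every $m\in\mathbb{Z}_4$. Let $\mathcal{A}$ be the set of all $2^{2n}$-QAM sequences associated with tuples $(\mathbf{s}_0,\dots,\mathbf{s}_{n-1})$ with $\mathbf{s}_i\in\mathcal{S}_i$ for all $i$. Then $$\mathrm{PMEPR}(\mathcal{A})<\frac{3}{4}\cdot\frac{x}{(1-\frac{y}{2})^2}.$$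
   Context: Let $j=\sqrt{-1}$. Fix $T>0$ and reals $f_0,\Delta f$ with $T\Delta f$ a positive integer; set $f_k=f_0+k\Delta f$. For a complex sequence $\mathbf{a}=(a_0,\dots,a_{N-1})$ define $S_{\mathbf{a}}(t)=\sum_{k=0}^{N-1}a_ke^{2\pi j f_k t}$, $P_{\mathbf{a}}(t)=|S_{\mathbf{a}}(t)|^2$, and $\mathrm{PEP}(\mathbf{a})=\sup_{t\in[0,T]}P_{\mathbf{a}}(t)$. A QPSK sequence of length $N$ is a sequence $\mathbf{s}=(s_0,\dots,s_{N-1})$ with every $s_k\in\{1,j,-1,-j\}$; $j^m\mathbf{s}=(j^ms_0,\dots,j^ms_{N-1})$. The $2^{2n}$-QAM sequence associated with QPSK sequences $\mathbf{s}_0,\dots,\mathbf{s}_{n-1}$, $\mathbf{s}_i=(s_{i,0},\dots,s_{i,N-1})$, is $\mathbf{a}=(a_0,\dots,a_{N-1})$ with $a_k=\frac{\sqrt2}{2}e^{\pi j/4}\sum_{i=0}^{n-1}2^{n-1-i}s_{i,k}$. The mean envelope power of $\mathcal{A}$ is $P_{av}(\mathcal{A})=\mathbb{E}\big[\frac1T\int_0^TP_{\mathbf{a}}(t)\,dt\big]=\mathbb{E}\|\mathbf{a}\|^2$, where the expectation is over $\mathbf{a}$ associated with $(\mathbf{s}_0,\dots,\mathbf{s}_{n-1})$ chosen uniformly at random from $\mathcal{S}_0\times\cdots\times\mathcal{S}_{n-1}$ (each $\mathbf{s}_i$ uniform in $\mathcal{S}_i$, independently). The peak-to-mean envelope power ratio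 is $\mathrm{PMEPR}(\mathcal{A})=\max_{\mathbf{a}\in\mathcal{A}}\mathrm{PEP}(\mathbf{a})/P_{av}(\mathcal{A})$. *)

theory Defs
  imports "HOL-Analysis.Analysis"
begin

text \<open>Sequences of length N are complex lists of length N; index k corresponds to a_k.\<close>

definition qpsk :: "nat \<Rightarrow> complex list \<Rightarrow> bool" where
  "qpsk N s \<longleftrightarrow> length s = N \<and> set s \<subseteq> {1, \<i>, -1, -\<i>}"

definition rot :: "nat \<Rightarrow> complex list \<Rightarrow> complex list" where
  "rot m s = map (\<lambda>z. \<i> ^ m * z) s"

definition sig :: "real \<Rightarrow> real \<Rightarrow> complex list \<Rightarrow> real \<Rightarrow> complex" where
  "sig f0 df a t = (\<Sum>k<length a. a ! k * exp (2 * pi * \<i> * complex_of_real ((f0 + real k * df) * t)))"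

definition env_power :: "real \<Rightarrow> real \<Rightarrow> complex list \<Rightarrow> real \<Rightarrow> real" where
  "env_power f0 df a t = (cmod (sig f0 df a t))\<^sup>2"

definition PEP :: "real \<Rightarrow> real \<Rightarrow> real \<Rightarrow> complex list \<Rightarrow> real" where
  "PEP T f0 df a = (SUP t\<in>{0..T}. env_power f0 df a t)"

definition qam :: "nat \<Rightarrow> nat \<Rightarrow> (nat \<Rightarrow> complex list) \<Rightarrow> complex list" where
  "qam N n ss = map (\<lambda>k. complex_of_real (sqrt 2 / 2) * exp (complex_of_real pi * \<i> / 4) *
      (\<Sum>i<n. of_nat (2 ^ (n - 1 - i)) * (ss i ! k))) [0..<N]"

definition sqnorm :: "complex list \<Rightarrow> real" where
  "sqnorm a = (\<Sum>k<length a. (cmod (a ! k))\<^sup>2)"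

definition tuples :: "nat \<Rightarrow> (nat \<Rightarrow> complex list set) \<Rightarrow> (nat \<Rightarrow> complex list) set" where
  "tuples n S = PiE {..<n} S"

definition QAM_set :: "nat \<Rightarrow> nat \<Rightarrow> (nat \<Rightarrow> complex list set) \<Rightarrow> complex list set" where
  "QAM_set N n S = qam N n ` tuples n S"

text \<open>Mean envelope power: expectation of ||a||^2 over uniform tuples.\<close>
definition P_av :: "nat \<Rightarrow> nat \<Rightarrow> (nat \<Rightarrow> complex list set) \<Rightarrow> real" where
  "P_av N n S = (\<Sum>ss\<in>tuples n S. sqnorm (qam N n ss)) / real (card (tuples n S))"

definition PMEPR :: "real \<Rightarrow> real \<Rightarrow> real \<Rightarrow> nat \<Rightarrow> nat \<Rightarrow> (nat \<Rightarrow> complex list set) \<Rightarrow> real" where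
  "PMEPR T f0 df N n S = Max (PEP T f0 df ` QAM_set N n S) / P_av N n S"

end

theory Submission
  imports Defs
begin

definition cc :: complex where "cc = complex_of_real (sqrt 2 / 2) * exp (complex_of_real pi * \<i> / 4)"

lemma cmod_cc: "cmod cc = sqrt 2 / 2"
  unfolding cc_def by (simp add: norm_mult)

lemma cc_cnj: "cc * cnj cc = 1/2"
proof -
  have "cc * cnj cc = complex_of_real ((cmod cc)^2)" by (rule complex_norm_square[symmetric])
  also have "\<dots> = 1/2" by (simp add: cmod_cc power_divide)
  finally show ?thesis .
qed

lemma qam_nth: "k < N \<Longrightarrow> qam N n ss ! k = cc * (\<Sum>i<n. of_nat (2 ^ (n - 1 - i)) * (ss i ! k))"
  unfolding qam_def cc_def by simp

lemma length_qam[simp]: "length (qam N n ss) = N" unfolding qam_def by simp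

lemma sig_qam:
  assumes "\<And>i. i < n \<Longrightarrow> length (ss i) = N"
  shows "sig f0 df (qam N n ss) t = cc * (\<Sum>i<n. of_nat (2 ^ (n - 1 - i)) * sig f0 df (ss i) t)"
proof -
  have "sig f0 df (qam N n ss) t = (\<Sum>k<N. cc * (\<Sum>i<n. of_nat (2 ^ (n - 1 - i)) * (ss i ! k)) *
     exp (2 * pi * \<i> * complex_of_real ((f0 + real k * df) * t)))"
    unfolding sig_def by (simp add: qam_nth)
  also have "\<dots> = cc * (\<Sum>k<N. \<Sum>i<n. of_nat (2 ^ (n - 1 - i)) * ((ss i ! k) *
     exp (2 * pi * \<i> * complex_of_real ((f0 + real k * df) * t))))"
    by (simp add: sum_distrib_left sum_distrib_right mult_ac)
  also have "\<dots> = cc * (\<Sum>i<n. \<Sum>k<N. of_nat (2 ^ (n - 1 - i)) * ((ss i ! k) *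
     exp (2 * pi * \<i> * complex_of_real ((f0 + real k * df) * t))))"
    by (subst sum.swap) simp
  also have "\<dots> = cc * (\<Sum>i<n. of_nat (2 ^ (n - 1 - i)) * sig f0 df (ss i) t)"
    unfolding sig_def using assms by (simp add: sum_distrib_left)
  finally show ?thesis .
qed

lemma env_bdd: "bdd_above ((\<lambda>t. env_power f0 df a t) ` A)"
proof -
  have "\<And>t. env_power f0 df a t \<le> (\<Sum>k<length a. cmod (a ! k))^2"
  proof -
    fix t
    have "cmod (sig f0 df a t) \<le> (\<Sum>k<length a. cmod (a ! k * exp (2 * pi * \<i> * complex_of_real ((f0 + real k * df) * t))))"
      unfolding sig_def by (rule norm_sum)
    also have "\<dots> = (\<Sum>k<length a. cmod (a ! k))"
      by (simp add: norm_mult)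
    finally show "env_power f0 df a t \<le> (\<Sum>k<length a. cmod (a ! k))^2"
      unfolding env_power_def by (simp add: power_mono)
  qed
  then show ?thesis by (intro bdd_aboveI2) blast
qed

lemma env_le_PEP: "T \<ge> 0 \<Longrightarrow> t \<in> {0..T} \<Longrightarrow> env_power f0 df a t \<le> PEP T f0 df a"
  unfolding PEP_def by (rule cSUP_upper) (auto intro: env_bdd)

lemma rot_rot: "rot m (rot m' s) = rot (m + m') s"
  unfolding rot_def by (simp add: power_add mult_ac)

lemma rot4: "rot 4 s = s"
  unfolding rot_def by (simp add: map_idI)

lemma cross_zero:
  assumes closed: "\<And>i s m. i < n \<Longrightarrow> s \<in> S i \<Longrightarrow> m < 4 \<Longrightarrow> rot m s \<in> S i"
    and len: "\<And>i s. i < n \<Longrightarrow> s \<in> S i \<Longrightarrow> length s = N"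
    and i: "i < n" and i': "i' < n" and ne: "i \<noteq> i'" and k: "k < N"
  shows "(\<Sum>ss\<in>tuples n S. ss i ! k * cnj (ss i' ! k)) = 0"
proof -
  let ?A = "tuples n S"
  let ?g = "\<lambda>ss. ss(i := rot 1 (ss i))"
  let ?h = "\<lambda>ss. ss(i := rot 3 (ss i))"
  let ?f = "\<lambda>ss. ss i ! k * cnj (ss i' ! k)"
  have bij: "bij_betw ?g ?A ?A"
  proof (rule bij_betw_byWitness[where f'="?h"])
    show "\<forall>a\<in>?A. ?h (?g a) = a" by (auto simp: rot_rot rot4)
    show "\<forall>a\<in>?A. ?g (?h a) = a" by (auto simp: rot_rot rot4)
    show "?g ` ?A \<subseteq> ?A"
    proof
      fix y assume "y \<in> ?g ` ?A"
      then obtain ss where ss: "ss \<in> ?A" "y = ?g ss" by blast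
      have "rot 1 (ss i) \<in> S i" using closed[of i "ss i" 1] i ss(1) unfolding tuples_def by auto
      then show "y \<in> ?A" using ss i unfolding tuples_def by (auto simp: PiE_iff extensional_def)
    qed
    show "?h ` ?A \<subseteq> ?A"
    proof
      fix y assume "y \<in> ?h ` ?A"
      then obtain ss where ss: "ss \<in> ?A" "y = ?h ss" by blast
      have "rot 3 (ss i) \<in> S i" using closed[of i "ss i" 3] i ss(1) unfolding tuples_def by auto
      then show "y \<in> ?A" using ss i unfolding tuples_def by (auto simp: PiE_iff extensional_def)
    qed
  qed
  have "sum ?f ?A = sum (?f \<circ> ?g) ?A" using sum.reindex_bij_betw[OF bij, of ?f] by simp
  also have "\<dots> = sum (\<lambda>ss. \<i> * ?f ss) ?A"
  proof (rule sum.cong)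
    fix ss assume "ss \<in> ?A"
    then have "length (ss i) = N" using len i unfolding tuples_def by auto
    then show "(?f \<circ> ?g) ss = \<i> * ?f ss" using ne k by (simp add: rot_def)
  qed simp
  also have "\<dots> = \<i> * sum ?f ?A" by (simp add: sum_distrib_left)
  finally have "(1 - \<i>) * sum ?f ?A = 0" by (simp add: algebra_simps)
  then show ?thesis by simp
qed

lemma qpsk_unit: "qpsk N s \<Longrightarrow> k < N \<Longrightarrow> s ! k * cnj (s ! k) = 1"
proof -
  assume q: "qpsk N s" and k: "k < N"
  then have "s ! k \<in> {1, \<i>, -1, -\<i>}" unfolding qpsk_def using nth_mem by auto
  then show ?thesis by auto
qed

lemma sum_sqnorm:
  assumes closed: "\<And>i s m. i < n \<Longrightarrow> s \<in> S i \<Longrightarrow> m < 4 \<Longrightarrow> rot m s \<in> S i"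
    and q: "\<And>i s. i < n \<Longrightarrow> s \<in> S i \<Longrightarrow> qpsk N s"
  shows "(\<Sum>ss\<in>tuples n S. sqnorm (qam N n ss)) =
     real (card (tuples n S)) * real N / 2 * (\<Sum>i<n. real ((2::nat) ^ (n - 1 - i))^2)"
proof -
  let ?A = "tuples n S"
  define w where "w i = (2::nat) ^ (n - 1 - i)" for i
  have len: "\<And>i s. i < n \<Longrightarrow> s \<in> S i \<Longrightarrow> length s = N" using q unfolding qpsk_def by auto
  have memA: "\<And>ss i. ss \<in> ?A \<Longrightarrow> i < n \<Longrightarrow> ss i \<in> S i" unfolding tuples_def by auto
  have G: "(\<Sum>ss\<in>?A. ss i ! k * cnj (ss i' ! k)) = (if i = i' then of_nat (card ?A) else 0)"
    if "i < n" "i' < n" "k < N" for i i' k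
  proof (cases "i = i'")
    case True
    have "(\<Sum>ss\<in>?A. ss i ! k * cnj (ss i' ! k)) = (\<Sum>ss\<in>?A. 1)"
      using True that by (intro sum.cong) (auto intro: qpsk_unit q memA)
    then show ?thesis using True by simp
  next
    case False
    then show ?thesis using cross_zero[OF closed len that(1,2) False that(3)] by simp
  qed
  have one: "complex_of_real (sqnorm (qam N n ss)) =
      (\<Sum>k<N. 1/2 * (\<Sum>i<n. \<Sum>i'<n. of_nat (w i * w i') * (ss i ! k * cnj (ss i' ! k))))" for ss
  proof -
    have "complex_of_real (sqnorm (qam N n ss)) = (\<Sum>k<N. qam N n ss ! k * cnj (qam N n ss ! k))"
      unfolding sqnorm_def of_real_sum by (intro sum.cong) (simp_all add: complex_norm_square[symmetric] del: of_real_power)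
    also have "\<dots> = (\<Sum>k<N. (cc * cnj cc) * ((\<Sum>i<n. of_nat (w i) * (ss i ! k)) * (\<Sum>i'<n. of_nat (w i') * cnj (ss i' ! k))))"
      by (intro sum.cong) (simp_all add: qam_nth w_def cnj_sum mult_ac)
    also have "\<dots> = (\<Sum>k<N. 1/2 * (\<Sum>i<n. \<Sum>i'<n. of_nat (w i * w i') * (ss i ! k * cnj (ss i' ! k))))"
      by (simp add: cc_cnj sum_product mult_ac)
    finally show ?thesis .
  qed
  have "complex_of_real (\<Sum>ss\<in>?A. sqnorm (qam N n ss)) =
     (\<Sum>ss\<in>?A. \<Sum>k<N. 1/2 * (\<Sum>i<n. \<Sum>i'<n. of_nat (w i * w i') * (ss i ! k * cnj (ss i' ! k))))"
    by (simp add: one)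
  also have "\<dots> = (\<Sum>k<N. 1/2 * (\<Sum>i<n. \<Sum>i'<n. of_nat (w i * w i') * (\<Sum>ss\<in>?A. ss i ! k * cnj (ss i' ! k))))"
    by (simp add: sum_distrib_left sum.swap[of _ ?A] )
  also have "\<dots> = (\<Sum>k<N. 1/2 * (\<Sum>i<n. \<Sum>i'<n. of_nat (w i * w i') * (if i = i' then of_nat (card ?A) else 0)))"
    by (intro sum.cong refl) (simp add: G)
  also have "\<dots> = (\<Sum>k<N. 1/2 * (\<Sum>i<n. of_nat (w i * w i) * of_nat (card ?A)))"
    by (simp add: if_distrib sum.delta cong: if_cong)
  also have "\<dots> = complex_of_real (real (card ?A) * real N / 2 * (\<Sum>i<n. real (w i)^2))"
    by (simp add: sum_distrib_left sum_distrib_right power2_eq_square mult_ac)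
  finally show ?thesis unfolding w_def of_real_eq_iff .
qed

lemma key_ineq:
  fixes y :: real and n :: nat
  assumes "n \<ge> 1" "1 \<le> y" "y < 2"
  shows "(\<Sum>i<n. real ((2::nat) ^ (n - 1 - i)) * y ^ i)^2 * (2 - y)^2 < 3 * (\<Sum>i<n. real ((2::nat) ^ (n - 1 - i))^2)"
proof -
  have W: "(\<Sum>i<n. real ((2::nat) ^ (n - 1 - i)) * y ^ i) * (2 - y) = 2^n - y^n"
    using power_diff_sumr2[of y n 2] by (simp add: algebra_simps)
  have V: "3 * (\<Sum>i<n. real ((2::nat) ^ (n - 1 - i))^2) = 4^n - 1"
  proof -
    have "(1::real)^n - 4^n = (1 - 4) * (\<Sum>i<n. 4^(n - Suc i) * 1^i)" by (rule power_diff_sumr2)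
    moreover have "(\<Sum>i<n. real ((2::nat) ^ (n - 1 - i))^2) = (\<Sum>i<n. 4^(n - Suc i) * 1^i)"
      by (intro sum.cong refl) (simp add: power2_eq_square power_mult_distrib[symmetric])
    ultimately show ?thesis by simp
  qed
  have b1: "1 \<le> y^n" using assms by simp
  have b2: "y^n \<le> 2^n" using assms by (intro power_mono) auto
  have a2: "(2::real) \<le> 2^n" using assms
    by (metis power_one_right power_increasing one_le_numeral)
  have "(2^n - y^n)^2 \<le> ((2::real)^n - 1)^2" using b1 b2 by (intro power_mono) auto
  also have "\<dots> = 4^n - 2 * 2^n + 1" by (simp add: power2_eq_square algebra_simps power_mult_distrib[symmetric])
  also have "\<dots> < 4^n - 1" using a2 by simp
  finally have "(2^n - y^n)^2 < (4::real)^n - 1" .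
  then show ?thesis using W V by (simp add: power_mult_distrib[symmetric])
qed

theorem corollary1:
  fixes T f0 df x y :: real and N n :: nat and S :: "nat \<Rightarrow> complex list set"
  assumes "T > 0" and "\<exists>k::nat. k > 0 \<and> T * df = real k"
    and "N \<ge> 1" and "n \<ge> 1" and "x > 1" and "1 \<le> y" and "y < 2"
    and "\<And>i. i < n \<Longrightarrow> S i \<noteq> {}"
    and "\<And>i s. i < n \<Longrightarrow> s \<in> S i \<Longrightarrow> qpsk N s"
    and "\<And>i s. i < n \<Longrightarrow> s \<in> S i \<Longrightarrow> PEP T f0 df s \<le> x * y ^ (2 * i) * real N"
    and "\<And>i s m. i < n \<Longrightarrow> s \<in> S i \<Longrightarrow> m < 4 \<Longrightarrow> rot m s \<in> S i"
  shows "PMEPR T f0 df N n S < 3 / 4 * (x / (1 - y / 2)\<^sup>2)"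
proof -
  note q = assms(9) and pep = assms(10) and closed = assms(11)
  let ?A = "tuples n S"
  define W where "W = (\<Sum>i<n. real ((2::nat) ^ (n - 1 - i)) * y ^ i)"
  define V where "V = (\<Sum>i<n. real ((2::nat) ^ (n - 1 - i))^2)"
  define B where "B = x * real N / 2 * W^2"
  have len: "\<And>i s. i < n \<Longrightarrow> s \<in> S i \<Longrightarrow> length s = N" using q unfolding qpsk_def by auto
  have memA: "\<And>ss i. ss \<in> ?A \<Longrightarrow> i < n \<Longrightarrow> ss i \<in> S i" unfolding tuples_def by auto
  have finS: "finite (S i)" if "i < n" for i
  proof (rule finite_subset)
    show "S i \<subseteq> {xs. set xs \<subseteq> {1, \<i>, -1, -\<i>} \<and> length xs = N}" using q[OF that] unfolding qpsk_def by auto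
    show "finite {xs. set xs \<subseteq> {1, \<i>, -1, -\<i>::complex} \<and> length xs = N}" by (rule finite_lists_length_eq) simp
  qed
  have finA: "finite ?A" unfolding tuples_def by (rule finite_PiE) (auto intro: finS)
  have neA: "?A \<noteq> {}" unfolding tuples_def using assms(8) by (auto simp: PiE_eq_empty_iff)
  have cardpos: "card ?A > 0" using finA neA by (simp add: card_gt_0_iff)
  have W0: "W \<ge> 0" unfolding W_def using assms(6) by (intro sum_nonneg) auto
  have pepA: "PEP T f0 df (qam N n ss) \<le> B" if ss: "ss \<in> ?A" for ss
    unfolding PEP_def
  proof (rule cSUP_least)
    show "{0..T} \<noteq> {}" using assms(1) by simp
    fix t assume t: "t \<in> {0..T}"
    have si: "cmod (sig f0 df (ss i) t) \<le> sqrt (x * real N) * y ^ i" if i: "i < n" for i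
    proof (rule power2_le_imp_le)
      have "(cmod (sig f0 df (ss i) t))^2 = env_power f0 df (ss i) t" unfolding env_power_def by simp
      also have "\<dots> \<le> PEP T f0 df (ss i)" using env_le_PEP[OF _ t] assms(1) by simp
      also have "\<dots> \<le> x * y ^ (2 * i) * real N" using pep[OF i memA[OF ss i]] .
      also have "\<dots> = (sqrt (x * real N) * y ^ i)^2" using assms(5)
        by (simp add: power_mult_distrib power_mult[symmetric] mult_ac)
      finally show "(cmod (sig f0 df (ss i) t))^2 \<le> (sqrt (x * real N) * y ^ i)^2" .
      show "0 \<le> sqrt (x * real N) * y ^ i" using assms(5,6) by simp
    qed
    have "cmod (sig f0 df (qam N n ss) t) = cmod cc * cmod (\<Sum>i<n. of_nat (2 ^ (n - 1 - i)) * sig f0 df (ss i) t)"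
      using sig_qam[of n ss N f0 df t] len memA[OF ss] by (simp add: norm_mult)
    also have "\<dots> \<le> cmod cc * (\<Sum>i<n. real (2 ^ (n - 1 - i)) * cmod (sig f0 df (ss i) t))"
      by (intro mult_left_mono order.trans[OF norm_sum]) (simp_all add: norm_mult norm_power)
    also have "\<dots> \<le> cmod cc * (\<Sum>i<n. real (2 ^ (n - 1 - i)) * (sqrt (x * real N) * y ^ i))"
      by (intro mult_left_mono sum_mono) (simp_all add: si)
    also have "\<dots> = sqrt 2 / 2 * sqrt (x * real N) * W"
      by (simp add: cmod_cc W_def sum_distrib_left mult_ac)
    finally have c: "cmod (sig f0 df (qam N n ss) t) \<le> sqrt 2 / 2 * sqrt (x * real N) * W" .
    have "env_power f0 df (qam N n ss) t \<le> (sqrt 2 / 2 * sqrt (x * real N) * W)^2"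
      unfolding env_power_def by (rule power_mono[OF c]) simp
    also have "\<dots> = B" using assms(5) unfolding B_def by (simp add: power_mult_distrib power_divide)
    finally show "env_power f0 df (qam N n ss) t \<le> B" .
  qed
  have Mle: "Max (PEP T f0 df ` QAM_set N n S) \<le> B"
    unfolding QAM_set_def using finA neA pepA by (subst Max_le_iff) auto
  have Pav: "P_av N n S = real N / 2 * V"
  proof -
    have e: "\<And>c a b::real. c > 0 \<Longrightarrow> c * a / 2 * b / c = a / 2 * b" by simp
    have "P_av N n S = real (card ?A) * real N / 2 * V / real (card ?A)"
      unfolding P_av_def V_def using sum_sqnorm[OF closed q] by simp
    then show ?thesis using e cardpos by simp
  qed
  have V0: "V > 0" unfolding V_def using assms(4)
    by (intro sum_pos) (auto simp: lessThan_empty_iff)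
  have PavPos: "P_av N n S > 0" unfolding Pav using V0 assms(3) by simp
  have "PMEPR T f0 df N n S \<le> B / P_av N n S"
    unfolding PMEPR_def by (rule divide_right_mono[OF Mle]) (use PavPos in simp)
  also have "\<dots> = x * W^2 / V" unfolding B_def Pav using assms(3) by simp
  also have "\<dots> < 3 / 4 * (x / (1 - y / 2)\<^sup>2)"
  proof -
    have k: "W^2 * (2 - y)^2 < 3 * V" using key_ineq[OF assms(4,6,7)] unfolding W_def V_def .
    have "(1 - y/2)^2 = (2 - y)^2 / 4" by (simp add: power_divide[symmetric] field_simps)
    moreover have "(2 - y)^2 > 0" using assms(7) by simp
    ultimately show ?thesis using k V0 assms(5)
      by (simp add: field_simps)
  qed
  finally show ?thesis .
qed

end
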